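(* Let $n\ge1$, let $M_1,\dots,M_n\ge0$ be integers, let $\sigma,\tau$ be permutations of $\{1,\dots,n\}$, and let $a,b,c,d,q$ be generic. For integers $0\le k_i\le M_i$ and $0\le l\le M_1+\dots+M_n$, $$R^l_{k_1+\dots+k_n}(a,b,c,d;M_1+\dots+M_n;q)=\sum_{\substack{m_1+\dots+m_n=l\\0\le m_i\le M_i}}\prod_{i=1}^n R_{k_i}^{m_i}\big(aq^{|k|_i^\sigma},\,bq^{|M-k|_i^\tau},\,cq^{|m|_i^{\mathrm{id}}},\,dq^{|M-m|_i^{\mathrm{id}}};M_i;q\big).$$
   Context: For a multi-index $v=(v_1,\dots,v_n)$ and a permutation $\sigma$, $|v|_i^\sigma=\sum_{\{j:\,\sigma(j)<\sigma(i)\}}v_j$ (so $|v|_i^{\mathrm{id}}=v_1+\dots+v_{i-1}$); $M-k$ denotes $(M_1-k_1,\dots,M_n-k_n)$. $h_k(x;a)=\prod_{j=0}^{k-1}(1-axq^j+a^2q^{2j})$, and for generic parameters $R_k^l(a,b,c,d;N;q)$ are the unique coefficients with $h_k(x;a)h_{N-k}(x;b)=\sum_{l=0}^N R_k^l(a,b,c,d;N;q)h_l(x;c)h_{N-l}(x;d)$. *)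

theory Defs
  imports "HOL-Computational_Algebra.Polynomial" "HOL-Combinatorics.Permutations"
begin

definition hpoly :: "complex \<Rightarrow> complex \<Rightarrow> nat \<Rightarrow> complex poly" where
  "hpoly q a k = (\<Prod>j<k. [:1 + a^2 * q^(2*j), - a * q^j:])"

text \<open>The family h_l(x;c) h_{N-l}(x;d), l = 0..N, is linearly independent
  (then it is a basis of polynomials of degree at most N and the coefficients R exist
  and are unique).\<close>
definition basis_indep :: "complex \<Rightarrow> complex \<Rightarrow> complex \<Rightarrow> nat \<Rightarrow> bool" where
  "basis_indep q c d N \<longleftrightarrow>
     (\<forall>f :: nat \<Rightarrow> complex.
        (\<Sum>l\<le>N. smult (f l) (hpoly q c l * hpoly q d (N - l))) = 0 \<longrightarrow> (\<forall>l\<le>N. f l = 0))"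

definition Rcoef :: "nat \<Rightarrow> nat \<Rightarrow> complex \<Rightarrow> complex \<Rightarrow> complex \<Rightarrow> complex \<Rightarrow> nat \<Rightarrow> complex \<Rightarrow> complex" where
  "Rcoef k l a b c d N q =
     (THE f :: nat \<Rightarrow> complex. (\<forall>j>N. f j = 0) \<and>
        hpoly q a k * hpoly q b (N - k) =
          (\<Sum>j\<le>N. smult (f j) (hpoly q c j * hpoly q d (N - j)))) l"

text \<open>|v|_i^sigma = sum of v_j over j with sigma j < sigma i (indices 0..n-1).\<close>
definition wsum :: "nat \<Rightarrow> (nat \<Rightarrow> nat) \<Rightarrow> (nat \<Rightarrow> nat) \<Rightarrow> nat \<Rightarrow> nat" where
  "wsum n \<sigma> v i = (\<Sum>j\<in>{j. j < n \<and> \<sigma> j < \<sigma> i}. v j)"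

text \<open>Genericity of (c,d,q) relevant for all coefficient families occurring up to size Ntot:
  all families with parameters c q^s, d q^t are independent.\<close>
definition generic_cdq :: "complex \<Rightarrow> complex \<Rightarrow> complex \<Rightarrow> nat \<Rightarrow> bool" where
  "generic_cdq q c d Ntot \<longleftrightarrow>
     (\<forall>N\<le>Ntot. \<forall>s t :: nat. basis_indep q (c * q^s) (d * q^t) N)"

end

theory Submission
  imports Defs
begin


interpretation pv: vector_space "smult :: complex \<Rightarrow> complex poly \<Rightarrow> complex poly"
  by unfold_locales (simp_all add: smult_add_right smult_add_left)

lemma degree_hpoly: "degree (hpoly q a k) \<le> k"
proof -
  have "degree (hpoly q a k) \<le> (\<Sum>j<k. degree [:1 + a^2 * q^(2*j), - a * q^j:])"
    using degree_prod_sum_le[OF finite_lessThan, where f="\<lambda>j. [:1 + a^2 * q^(2*j), - a * q^j:]"]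
    unfolding comp_def hpoly_def .
  also have "\<dots> \<le> (\<Sum>j<k. 1)" by (intro sum_mono) auto
  finally show ?thesis by simp
qed

lemma in_span_monoms:
  assumes "degree (p::complex poly) \<le> N"
  shows "p \<in> pv.span ((\<lambda>j. monom 1 j) ` {..N})"
proof -
  have "p = (\<Sum>j\<le>N. smult (coeff p j) (monom 1 j))"
    using poly_as_sum_of_monoms'[OF assms] by (simp add: smult_monom)
  also have "\<dots> \<in> pv.span ((\<lambda>j. monom 1 j) ` {..N})"
    by (intro pv.span_sum pv.span_scale pv.span_base) auto
  finally show ?thesis .
qed

lemma span_hpoly:
  assumes bi: "basis_indep q c d N" and dp: "degree p \<le> N"
  shows "\<exists>f. p = (\<Sum>l\<le>N. smult (f l) (hpoly q c l * hpoly q d (N - l)))"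
proof -
  define g where "g l = hpoly q c l * hpoly q d (N - l)" for l
  define B where "B = g ` {..N}"
  define W where "W = (\<lambda>j. monom (1::complex) j) ` {..N}"
  have H: "\<And>ff. (\<Sum>l\<le>N. smult (ff l) (g l)) = 0 \<Longrightarrow> l \<le> N \<Longrightarrow> ff l = 0" for l
    using bi unfolding basis_indep_def g_def by blast
  have inj: "inj_on g {..N}"
  proof (rule inj_onI, rule ccontr)
    fix l l' assume l: "l \<in> {..N}" "l' \<in> {..N}" "g l = g l'" "l \<noteq> l'"
    define f where "f j = (if j = l then 1 else if j = l' then -1 else (0::complex))" for j
    have "(\<Sum>j\<le>N. smult (f j) (g j)) = (\<Sum>j\<in>{l,l'}. smult (f j) (g j))"
      by (rule sum.mono_neutral_right) (use l in \<open>auto simp: f_def\<close>)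
    also have "\<dots> = 0" using l by (simp add: f_def)
    finally have "f l = 0" using H l by auto
    then show False by (simp add: f_def)
  qed
  have indep: "pv.independent B"
  proof (rule pv.independent_if_scalars_zero)
    show "finite B" unfolding B_def by simp
    fix f x assume s: "(\<Sum>x\<in>B. smult (f x) x) = 0" and x: "x \<in> B"
    have "(\<Sum>l\<le>N. smult (f (g l)) (g l)) = 0"
      using s unfolding B_def by (simp add: sum.reindex[OF inj])
    then have "\<forall>l\<le>N. f (g l) = 0" using H[where ff="\<lambda>l. f (g l)"] by blast
    then show "f x = 0" using x unfolding B_def by auto
  qed
  have BW: "B \<subseteq> pv.span W"
  proof -
    have "g l \<in> pv.span W" if "l \<le> N" for l
    proof -
      have "degree (g l) \<le> l + (N - l)" unfolding g_def
        by (rule order.trans[OF degree_mult_le add_mono[OF degree_hpoly degree_hpoly]])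
      then show ?thesis using that unfolding W_def by (intro in_span_monoms) auto
    qed
    then show ?thesis unfolding B_def by auto
  qed
  have cW: "card W = Suc N" unfolding W_def
    by (subst card_image) (auto intro: inj_onI simp: monom_eq_iff')
  have cB: "card B = Suc N" unfolding B_def using inj by (simp add: card_image)
  have "p \<in> pv.span B"
  proof (rule ccontr)
    assume "p \<notin> pv.span B"
    then have i2: "pv.independent (insert p B)" using pv.independent_insertI indep by blast
    have "insert p B \<subseteq> pv.span W" using BW in_span_monoms[OF dp] unfolding W_def by auto
    then have "card (insert p B) \<le> card W" using pv.independent_span_bound[OF _ i2] unfolding W_def by auto
    moreover have "p \<notin> B" using \<open>p \<notin> pv.span B\<close> pv.span_base by blast
    ultimately show False using cB cW unfolding B_def by simp
  qed
  then obtain u where "p = (\<Sum>v\<in>B. smult (u v) v)"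
    using pv.span_finite[of B] unfolding B_def by auto
  then have "p = (\<Sum>l\<le>N. smult (u (g l)) (g l))" unfolding B_def by (simp add: sum.reindex[OF inj])
  then show ?thesis unfolding g_def by (intro exI[of _ "\<lambda>l. u (g l)"]) (simp add: g_def)
qed



lemma coef_unique:
  assumes bi: "basis_indep q c d N"
    and eq: "(\<Sum>j\<le>N. smult (f j) (hpoly q c j * hpoly q d (N - j))) =
             (\<Sum>j\<le>N. smult (g j) (hpoly q c j * hpoly q d (N - j)))"
    and l: "l \<le> N"
  shows "f l = g l"
proof -
  have "(\<Sum>j\<le>N. smult (f j - g j) (hpoly q c j * hpoly q d (N - j))) = 0"
    using eq by (simp add: smult_diff_left sum_subtractf)
  then have "f l - g l = 0" using bi l unfolding basis_indep_def
    by (elim allE[where x="\<lambda>j. f j - g j"]) auto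
  then show ?thesis by simp
qed

lemma Rcoef_char:
  assumes bi: "basis_indep q c d N" and k: "k \<le> N"
  shows "(\<forall>j>N. Rcoef k j a b c d N q = 0) \<and> hpoly q a k * hpoly q b (N - k) =
     (\<Sum>j\<le>N. smult (Rcoef k j a b c d N q) (hpoly q c j * hpoly q d (N - j)))"
proof -
  let ?P = "\<lambda>f :: nat \<Rightarrow> complex. (\<forall>j>N. f j = 0) \<and> hpoly q a k * hpoly q b (N - k) =
          (\<Sum>j\<le>N. smult (f j) (hpoly q c j * hpoly q d (N - j)))"
  have "degree (hpoly q a k * hpoly q b (N - k)) \<le> k + (N - k)"
    by (rule order.trans[OF degree_mult_le add_mono[OF degree_hpoly degree_hpoly]])
  then obtain f where f: "hpoly q a k * hpoly q b (N - k) =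
          (\<Sum>j\<le>N. smult (f j) (hpoly q c j * hpoly q d (N - j)))"
    using span_hpoly[OF bi] k by force
  define f' where "f' j = (if j \<le> N then f j else 0)" for j
  have Pf': "?P f'" using f unfolding f'_def by (auto intro!: sum.cong)
  have uniq: "g = f'" if "?P g" for g
  proof
    fix j show "g j = f' j"
    proof (cases "j \<le> N")
      case True
      then show ?thesis using coef_unique[OF bi _ True, of g f'] that Pf' by auto
    next
      case False then show ?thesis using that Pf' by auto
    qed
  qed
  have "?P (THE f. ?P f)" by (rule theI[of ?P f', OF Pf' uniq])
  then show ?thesis unfolding Rcoef_def by blast
qed

lemma Rcoef_eq:
  assumes bi: "basis_indep q c d N" and k: "k \<le> N" and l: "l \<le> N"
    and eq: "hpoly q a k * hpoly q b (N - k) =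
          (\<Sum>j\<le>N. smult (f j) (hpoly q c j * hpoly q d (N - j)))"
  shows "Rcoef k l a b c d N q = f l"
  using coef_unique[OF bi _ l, of "\<lambda>j. Rcoef k j a b c d N q" f] Rcoef_char[OF bi k, of a b] eq
  by auto

lemma hpoly_add: "hpoly q a (k1 + k2) = hpoly q a k1 * hpoly q (a * q^k1) k2"
proof (induction k2)
  case 0 then show ?case by (simp add: hpoly_def)
next
  case (Suc k2)
  have e1: "(a * q ^ k1)\<^sup>2 * q ^ (2 * k2) = a^2 * q^(2*(k1+k2))"
    by (simp add: power_add power_mult_distrib power_mult[symmetric] algebra_simps)
  have e2: "a * q ^ k1 * q ^ k2 = a * q ^ (k1 + k2)" by (simp add: power_add)
  have "hpoly q a (k1 + Suc k2) = hpoly q a (k1 + k2) * [:1 + a^2 * q^(2*(k1+k2)), - a * q^(k1+k2):]"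
    by (simp only: hpoly_def add_Suc_right prod.lessThan_Suc)
  moreover have "hpoly q (a * q^k1) (Suc k2) = hpoly q (a * q^k1) k2 * [:1 + a^2 * q^(2*(k1+k2)), - a * q^(k1+k2):]"
    by (simp only: hpoly_def prod.lessThan_Suc e1 e2 mult_minus_left)
  ultimately show ?case using Suc by (simp only: mult.assoc)
qed



lemma prod_hpoly_seq:
  "(\<Prod>p<(n::nat). hpoly q (a * q^(\<Sum>p'<p. K p')) (K p)) = hpoly q a (\<Sum>p<n. (K::nat\<Rightarrow>nat) p)"
proof (induction n)
  case 0 then show ?case by (simp add: hpoly_def)
next
  case (Suc n)
  then show ?case by (simp add: hpoly_add)
qed

lemma prod_hpoly_perm:
  assumes s: "\<sigma> permutes {..<n}"
  shows "(\<Prod>i<n. hpoly q (a * q^(wsum n \<sigma> K i)) (K i)) = hpoly q a (\<Sum>i<n. K i)"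
proof -
  define \<pi> where "\<pi> = inv \<sigma>"
  have pi: "\<pi> permutes {..<n}" unfolding \<pi>_def using permutes_inv[OF s] .
  have bij: "bij_betw \<pi> {..<n} {..<n}" using permutes_imp_bij[OF pi] .
  have inj: "inj \<pi>" using permutes_inj[OF pi] .
  have sp: "\<sigma> (\<pi> x) = x" for x unfolding \<pi>_def using permutes_inverses(1)[OF s] .
  have ps: "\<pi> (\<sigma> x) = x" for x unfolding \<pi>_def using permutes_inverses(2)[OF s] .
  have pin: "\<pi> x < n \<longleftrightarrow> x < n" for x using permutes_in_image[OF pi, of x] by simp
  have sn: "\<sigma> x < n \<longleftrightarrow> x < n" for x using permutes_in_image[OF s, of x] by simp
  have w: "wsum n \<sigma> K (\<pi> p) = (\<Sum>p'<p. K (\<pi> p'))" if "p < n" for p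
  proof -
    have "{j. j < n \<and> \<sigma> j < \<sigma> (\<pi> p)} = \<pi> ` {..<p}"
    proof (rule set_eqI, rule iffI)
      fix j assume "j \<in> {j. j < n \<and> \<sigma> j < \<sigma> (\<pi> p)}"
      then show "j \<in> \<pi> ` {..<p}" using sp ps by (intro image_eqI[of _ _ "\<sigma> j"]) auto
    next
      fix j assume "j \<in> \<pi> ` {..<p}"
      then show "j \<in> {j. j < n \<and> \<sigma> j < \<sigma> (\<pi> p)}" using sp pin that by auto
    qed
    then show ?thesis unfolding wsum_def
      by (simp add: sum.reindex[OF inj_on_subset[OF inj subset_UNIV]])
  qed
  have "(\<Prod>i<n. hpoly q (a * q^(wsum n \<sigma> K i)) (K i)) =
        (\<Prod>p<n. hpoly q (a * q^(wsum n \<sigma> K (\<pi> p))) (K (\<pi> p)))"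
    by (rule prod.reindex_bij_betw[OF bij, symmetric])
  also have "\<dots> = (\<Prod>p<n. hpoly q (a * q^(\<Sum>p'<p. K (\<pi> p'))) (K (\<pi> p)))"
    by (intro prod.cong) (auto simp: w)
  also have "\<dots> = hpoly q a (\<Sum>p<n. K (\<pi> p))" by (rule prod_hpoly_seq)
  also have "(\<Sum>p<n. K (\<pi> p)) = (\<Sum>i<n. K i)" by (rule sum.reindex_bij_betw[OF bij])
  finally show ?thesis .
qed

lemma wsum_id: "i < n \<Longrightarrow> wsum n id m i = (\<Sum>j<i. m j)"
  unfolding wsum_def by (intro sum.cong) auto



definition Sset :: "nat \<Rightarrow> (nat \<Rightarrow> nat) \<Rightarrow> (nat \<Rightarrow> nat) set" where
  "Sset n M = {m. (\<forall>i<n. m i \<le> M i) \<and> (\<forall>i\<ge>n. m i = 0)}"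

lemma Sset_0: "Sset 0 M = {\<lambda>_. 0}"
  unfolding Sset_def by auto

lemma Sset_Suc: "Sset (Suc n) M = (\<lambda>(m,j). m(n:=j)) ` (Sset n M \<times> {..M n})"
proof (rule set_eqI, rule iffI)
  fix m assume m: "m \<in> Sset (Suc n) M"
  show "m \<in> (\<lambda>(m,j). m(n:=j)) ` (Sset n M \<times> {..M n})"
    by (rule image_eqI[of _ _ "(m(n:=0), m n)"]) (use m in \<open>auto simp: Sset_def\<close>)
next
  fix m assume "m \<in> (\<lambda>(m,j). m(n:=j)) ` (Sset n M \<times> {..M n})"
  then show "m \<in> Sset (Suc n) M" unfolding Sset_def by (auto simp: less_Suc_eq)
qed

lemma Sset_inj: "inj_on (\<lambda>(m,j). m(n:=j)) (Sset n M \<times> {..M n})"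
proof (rule inj_onI, clarify)
  fix m j m' j' assume a: "m \<in> Sset n M" "m' \<in> Sset n M" "m(n := j) = m'(n := j')"
  have "j = j'" using fun_cong[OF a(3), of n] by simp
  moreover have "m = m'"
  proof
    fix i show "m i = m' i"
      using fun_cong[OF a(3), of i] a(1,2) by (cases "i = n") (auto simp: Sset_def)
  qed
  ultimately show "m = m' \<and> j = j'" by simp
qed

lemma finite_Sset: "finite (Sset n M)"
  by (induction n) (auto simp: Sset_0 Sset_Suc)

definition RR where
  "RR k \<alpha> \<beta> c d M q m i = Rcoef (k i) (m i) (\<alpha> i) (\<beta> i) (c*q^(\<Sum>j<i. m j))
     (d*q^(\<Sum>j<i. M j - m j)) (M i) q"

lemma RR_upd:
  assumes "i < (n::nat)" shows "RR k \<alpha> \<beta> c d M q (m(n:=j)) i = RR k \<alpha> \<beta> c d M q m i"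
proof -
  have "(\<Sum>x<i. (m(n:=j)) x) = (\<Sum>x<i. m x)" using assms by (intro sum.cong) auto
  moreover have "(\<Sum>x<i. M x - (m(n:=j)) x) = (\<Sum>x<i. M x - m x)" using assms by (intro sum.cong) auto
  ultimately show ?thesis unfolding RR_def using assms by auto
qed

lemma expand:
  assumes exp: "\<forall>i<n. \<forall>s t. hpoly q (\<alpha> i) (k i) * hpoly q (\<beta> i) (M i - k i) =
     (\<Sum>j\<le>M i. smult (Rcoef (k i) j (\<alpha> i) (\<beta> i) (c*q^s) (d*q^t) (M i) q)
        (hpoly q (c*q^s) j * hpoly q (d*q^t) (M i - j)))"
  shows "(\<Prod>i<n. hpoly q (\<alpha> i) (k i) * hpoly q (\<beta> i) (M i - k i)) =
    (\<Sum>m\<in>Sset n M. smult (\<Prod>i<n. RR k \<alpha> \<beta> c d M q m i)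
       (hpoly q c (\<Sum>i<n. m i) * hpoly q d (\<Sum>i<n. M i - m i)))"
  using exp
proof (induction n)
  case 0 then show ?case by (simp add: Sset_0 hpoly_def)
next
  case (Suc n)
  let ?A = "hpoly q (\<alpha> n) (k n) * hpoly q (\<beta> n) (M n - k n)"
  let ?F = "\<lambda>m. smult (\<Prod>i<Suc n. RR k \<alpha> \<beta> c d M q m i)
       (hpoly q c (\<Sum>i<Suc n. m i) * hpoly q d (\<Sum>i<Suc n. M i - m i))"
  have IH: "(\<Prod>i<n. hpoly q (\<alpha> i) (k i) * hpoly q (\<beta> i) (M i - k i)) =
    (\<Sum>m\<in>Sset n M. smult (\<Prod>i<n. RR k \<alpha> \<beta> c d M q m i)
       (hpoly q c (\<Sum>i<n. m i) * hpoly q d (\<Sum>i<n. M i - m i)))"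
    using Suc by auto
  have inner: "smult (\<Prod>i<n. RR k \<alpha> \<beta> c d M q m i)
       (hpoly q c (\<Sum>i<n. m i) * hpoly q d (\<Sum>i<n. M i - m i)) * ?A = (\<Sum>j\<le>M n. ?F (m(n:=j)))"
    if m: "m \<in> Sset n M" for m
  proof -
    define s where "s = (\<Sum>i<n. m i)"
    define t where "t = (\<Sum>i<n. M i - m i)"
    define P where "P = (\<Prod>i<n. RR k \<alpha> \<beta> c d M q m i)"
    have eA: "?A = (\<Sum>j\<le>M n. smult (Rcoef (k n) j (\<alpha> n) (\<beta> n) (c*q^s) (d*q^t) (M n) q)
        (hpoly q (c*q^s) j * hpoly q (d*q^t) (M n - j)))"
      using Suc.prems by blast
    have Fj: "?F (m(n:=j)) = smult P (smult (Rcoef (k n) j (\<alpha> n) (\<beta> n) (c*q^s) (d*q^t) (M n) q)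
       ((hpoly q c s * hpoly q d t) * (hpoly q (c*q^s) j * hpoly q (d*q^t) (M n - j))))" for j
    proof -
      have p: "(\<Prod>i<Suc n. RR k \<alpha> \<beta> c d M q (m(n:=j)) i) =
            P * Rcoef (k n) j (\<alpha> n) (\<beta> n) (c*q^s) (d*q^t) (M n) q"
        unfolding P_def s_def t_def by (simp add: RR_upd) (simp add: RR_def)
      have s1: "(\<Sum>i<Suc n. (m(n:=j)) i) = s + j" unfolding s_def
        by (simp add: sum.cong[of "{..<n}" "{..<n}" "\<lambda>i. (m(n:=j)) i" m])
      have s2: "(\<Sum>i<Suc n. M i - (m(n:=j)) i) = t + (M n - j)" unfolding t_def
        by (simp add: sum.cong[of "{..<n}" "{..<n}" "\<lambda>i. M i - (m(n:=j)) i" "\<lambda>i. M i - m i"])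
      show ?thesis unfolding p s1 s2 hpoly_add[of q c s j] hpoly_add[of q d t "M n - j"]
        by (simp add: ac_simps)
    qed
    show ?thesis unfolding Fj eA
      by (simp add: P_def s_def t_def sum_distrib_left mult_smult_left mult_smult_right mult.commute)
  qed
  have "(\<Prod>i<Suc n. hpoly q (\<alpha> i) (k i) * hpoly q (\<beta> i) (M i - k i)) =
      (\<Sum>m\<in>Sset n M. smult (\<Prod>i<n. RR k \<alpha> \<beta> c d M q m i)
       (hpoly q c (\<Sum>i<n. m i) * hpoly q d (\<Sum>i<n. M i - m i))) * ?A"
    by (simp add: IH)
  also have "\<dots> = (\<Sum>m\<in>Sset n M. \<Sum>j\<le>M n. ?F (m(n:=j)))"
    unfolding sum_distrib_right by (rule sum.cong[OF refl]) (rule inner)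
  also have "\<dots> = (\<Sum>(m,j)\<in>Sset n M \<times> {..M n}. ?F (m(n:=j)))"
    by (rule sum.cartesian_product)
  also have "\<dots> = (\<Sum>m\<in>Sset (Suc n) M. ?F m)"
    unfolding Sset_Suc sum.reindex[OF Sset_inj]
    by (rule sum.cong[OF refl]) (auto simp only: split_beta comp_def)
  finally show ?case .
qed



theorem mainTheorem9:
  fixes n :: nat and M k :: "nat \<Rightarrow> nat" and \<sigma> \<tau> :: "nat \<Rightarrow> nat"
    and a b c d q :: complex and l :: nat
  assumes "n \<ge> 1"
    and "\<sigma> permutes {..<n}" and "\<tau> permutes {..<n}"
    and "generic_cdq q c d (\<Sum>i<n. M i)"
    and "\<forall>i<n. k i \<le> M i"
    and "l \<le> (\<Sum>i<n. M i)"
  shows "Rcoef (\<Sum>i<n. k i) l a b c d (\<Sum>i<n. M i) q =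
    (\<Sum>m\<in>{m :: nat \<Rightarrow> nat. (\<forall>i<n. m i \<le> M i) \<and> (\<forall>i\<ge>n. m i = 0) \<and> (\<Sum>i<n. m i) = l}.
       \<Prod>i<n. Rcoef (k i) (m i)
                (a * q ^ wsum n \<sigma> k i)
                (b * q ^ wsum n \<tau> (\<lambda>j. M j - k j) i)
                (c * q ^ wsum n id m i)
                (d * q ^ wsum n id (\<lambda>j. M j - m j) i)
                (M i) q)"
proof -
  note sig = assms(2) and tau = assms(3) and gen = assms(4) and kM = assms(5) and lN = assms(6)
  define N where "N = (\<Sum>i<n. M i)"
  define K where "K = (\<Sum>i<n. k i)"
  define \<alpha> where "\<alpha> i = a * q ^ wsum n \<sigma> k i" for i
  define \<beta> where "\<beta> i = b * q ^ wsum n \<tau> (\<lambda>j. M j - k j) i" for i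
  define P where "P m = (\<Prod>i<n. RR k \<alpha> \<beta> c d M q m i)" for m
  define G where "G l = (\<Sum>m\<in>{m\<in>Sset n M. (\<Sum>i<n. m i) = l}. P m)" for l
  have KN: "K \<le> N" unfolding K_def N_def using kM by (intro sum_mono) auto
  have NK: "N - K = (\<Sum>i<n. M i - k i)" unfolding N_def K_def
    using kM by (intro sum_subtractf_nat[symmetric]) auto
  have bi: "basis_indep q (c * q^s) (d * q^t) N'" if "N' \<le> N" for s t N'
    using gen that unfolding generic_cdq_def N_def by blast
  have bi0: "basis_indep q c d N" using bi[of N 0 0] by simp
  have exp: "\<forall>i<n. \<forall>s t. hpoly q (\<alpha> i) (k i) * hpoly q (\<beta> i) (M i - k i) =
     (\<Sum>j\<le>M i. smult (Rcoef (k i) j (\<alpha> i) (\<beta> i) (c*q^s) (d*q^t) (M i) q)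
        (hpoly q (c*q^s) j * hpoly q (d*q^t) (M i - j)))"
  proof (intro allI impI)
    fix i s t assume i: "i < n"
    have "M i \<le> N" unfolding N_def using i by (intro member_le_sum) auto
    then have bii: "basis_indep q (c*q^s) (d*q^t) (M i)" using bi by blast
    show "hpoly q (\<alpha> i) (k i) * hpoly q (\<beta> i) (M i - k i) =
     (\<Sum>j\<le>M i. smult (Rcoef (k i) j (\<alpha> i) (\<beta> i) (c*q^s) (d*q^t) (M i) q)
        (hpoly q (c*q^s) j * hpoly q (d*q^t) (M i - j)))"
      using Rcoef_char[OF bii, where k="k i" and a="\<alpha> i" and b="\<beta> i"] kM i by auto
  qed
  have "hpoly q a K * hpoly q b (N - K) =
      (\<Prod>i<n. hpoly q (\<alpha> i) (k i)) * (\<Prod>i<n. hpoly q (\<beta> i) (M i - k i))"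
    unfolding NK unfolding K_def \<alpha>_def \<beta>_def
    by (simp add: prod_hpoly_perm[OF sig] prod_hpoly_perm[OF tau])
  also have "\<dots> = (\<Prod>i<n. hpoly q (\<alpha> i) (k i) * hpoly q (\<beta> i) (M i - k i))"
    by (rule prod.distrib[symmetric])
  also have "\<dots> = (\<Sum>m\<in>Sset n M. smult (P m)
       (hpoly q c (\<Sum>i<n. m i) * hpoly q d (\<Sum>i<n. M i - m i)))"
    unfolding P_def by (rule expand[OF exp])
  also have "\<dots> = (\<Sum>m\<in>Sset n M. smult (P m)
       (hpoly q c (\<Sum>i<n. m i) * hpoly q d (N - (\<Sum>i<n. m i))))"
  proof (rule sum.cong[OF refl])
    fix m assume "m \<in> Sset n M"
    then have "(\<Sum>i<n. M i - m i) = N - (\<Sum>i<n. m i)" unfolding N_def Sset_def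
      by (intro sum_subtractf_nat) auto
    then show "smult (P m) (hpoly q c (\<Sum>i<n. m i) * hpoly q d (\<Sum>i<n. M i - m i)) =
      smult (P m) (hpoly q c (\<Sum>i<n. m i) * hpoly q d (N - (\<Sum>i<n. m i)))" by simp
  qed
  also have "\<dots> = (\<Sum>j\<le>N. \<Sum>m\<in>{m\<in>Sset n M. (\<Sum>i<n. m i) = j}. smult (P m)
       (hpoly q c (\<Sum>i<n. m i) * hpoly q d (N - (\<Sum>i<n. m i))))"
  proof (rule sum.group[symmetric])
    show "finite (Sset n M)" by (rule finite_Sset)
    show "(\<lambda>m. \<Sum>i<n. m i) ` Sset n M \<subseteq> {..N}"
      unfolding N_def Sset_def by (auto intro!: sum_mono)
  qed simp
  also have "\<dots> = (\<Sum>j\<le>N. smult (G j) (hpoly q c j * hpoly q d (N - j)))"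
    unfolding G_def smult_sum
    by (intro sum.cong refl) auto
  finally have eq: "hpoly q a K * hpoly q b (N - K) =
      (\<Sum>j\<le>N. smult (G j) (hpoly q c j * hpoly q d (N - j)))" .
  have "Rcoef K l a b c d N q = G l"
    by (rule Rcoef_eq[OF bi0 KN _ eq]) (use lN in \<open>simp add: N_def\<close>)
  also have "G l = (\<Sum>m\<in>{m :: nat \<Rightarrow> nat. (\<forall>i<n. m i \<le> M i) \<and> (\<forall>i\<ge>n. m i = 0) \<and> (\<Sum>i<n. m i) = l}.
       \<Prod>i<n. Rcoef (k i) (m i)
                (a * q ^ wsum n \<sigma> k i)
                (b * q ^ wsum n \<tau> (\<lambda>j. M j - k j) i)
                (c * q ^ wsum n id m i)
                (d * q ^ wsum n id (\<lambda>j. M j - m j) i)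
                (M i) q)"
    unfolding G_def P_def
  proof (rule sum.cong)
    show "{m \<in> Sset n M. (\<Sum>i<n. m i) = l} =
      {m. (\<forall>i<n. m i \<le> M i) \<and> (\<forall>i\<ge>n. m i = 0) \<and> (\<Sum>i<n. m i) = l}"
      unfolding Sset_def by auto
  next
    fix m show "(\<Prod>i<n. RR k \<alpha> \<beta> c d M q m i) = (\<Prod>i<n. Rcoef (k i) (m i)
                (a * q ^ wsum n \<sigma> k i)
                (b * q ^ wsum n \<tau> (\<lambda>j. M j - k j) i)
                (c * q ^ wsum n id m i)
                (d * q ^ wsum n id (\<lambda>j. M j - m j) i)
                (M i) q)"
      by (intro prod.cong refl) (simp add: RR_def \<alpha>_def \<beta>_def wsum_id[of _ n m] wsum_id[of _ n "\<lambda>j. M j - m j"])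
  qed
  finally show ?thesis unfolding K_def N_def .
qed

end
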